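(* Fix a monomial order on $S$. Let $J,E,E'$ be ideals of $S$ and $\mathcal G_J$ a Gröbner basis of $J$, and assume $E$ and $E'$ are S-nice with respect to $\mathcal G_J$. Then $(J+E)\cap(J+E')=J+(E\cap E')$ if and only if $\mathrm{in}((J+E)\cap(J+E'))=\mathrm{in}(J)+\mathrm{in}(E\cap E')$.
   Context: $K$ is a field and $S=K[x_1,\ldots,x_n]$ with a fixed monomial order. For $0\neq f\in S$, $\mathrm{in}(f)$ denotes its leading monomial and $\mathrm{LT}(f)$ its leading term; for an ideal $I$, $\mathrm{in}(I)$ is the ideal generated by the leading monomials of the nonzero elements of $I$. For nonzero $f,g\in S$ the S-polynomial is $S(f,g)=\frac{\mathrm{lcm}(\mathrm{in}(f),\mathrm{in}(g))}{\mathrm{LT}(f)}f-\frac{\mathrm{lcm}(\mathrm{in}(f),\mathrm{in}(g))}{\mathrm{LT}(g)}g$. Given a Gröbner basis $\mathcal G_J$ of an ideal $J$, an ideal $E$ is called S-nice with respect to $\mathcal G_J$ if $S(f,g)\in E$ for all $f\in\mathcal G_J$ and all nonzero $g\in E$. *)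

theory Defs
  imports "HOL-Library.Poly_Mapping"
begin

text \<open>Polynomial ring S = K[x_v : v in 'v] with 'v a finite type of variables.\<close>

type_synonym ('v, 'a) mpoly = "('v \<Rightarrow>\<^sub>0 nat) \<Rightarrow>\<^sub>0 'a"

definition monomial_order :: "(('v \<Rightarrow>\<^sub>0 nat) \<Rightarrow> ('v \<Rightarrow>\<^sub>0 nat) \<Rightarrow> bool) \<Rightarrow> bool" where
  "monomial_order ord \<longleftrightarrow>
     (\<forall>a. ord a a) \<and>
     (\<forall>a b. ord a b \<and> ord b a \<longrightarrow> a = b) \<and>
     (\<forall>a b c. ord a b \<and> ord b c \<longrightarrow> ord a c) \<and>
     (\<forall>a b. ord a b \<or> ord b a) \<and>
     (\<forall>a. ord 0 a) \<and>
     (\<forall>a b c. ord a b \<longrightarrow> ord (a + c) (b + c))"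

definition is_ideal :: "('v, 'a::comm_ring_1) mpoly set \<Rightarrow> bool" where
  "is_ideal I \<longleftrightarrow> 0 \<in> I \<and> (\<forall>f\<in>I. \<forall>g\<in>I. f + g \<in> I) \<and> (\<forall>s. \<forall>f\<in>I. s * f \<in> I)"

definition ideal_gen :: "('v, 'a::comm_ring_1) mpoly set \<Rightarrow> ('v, 'a) mpoly set" where
  "ideal_gen A = \<Inter>{I. is_ideal I \<and> A \<subseteq> I}"

definition ideal_sum :: "('v, 'a::comm_ring_1) mpoly set \<Rightarrow> ('v, 'a) mpoly set \<Rightarrow> ('v, 'a) mpoly set" where
  "ideal_sum I J = {f + g | f g. f \<in> I \<and> g \<in> J}"

definition lm :: "(('v \<Rightarrow>\<^sub>0 nat) \<Rightarrow> ('v \<Rightarrow>\<^sub>0 nat) \<Rightarrow> bool) \<Rightarrow> ('v, 'a::zero) mpoly \<Rightarrow> ('v \<Rightarrow>\<^sub>0 nat)" where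
  "lm ord f = (THE m. m \<in> Poly_Mapping.keys f \<and> (\<forall>m'\<in>Poly_Mapping.keys f. ord m' m))"

definition lc :: "(('v \<Rightarrow>\<^sub>0 nat) \<Rightarrow> ('v \<Rightarrow>\<^sub>0 nat) \<Rightarrow> bool) \<Rightarrow> ('v, 'a::zero) mpoly \<Rightarrow> 'a" where
  "lc ord f = Poly_Mapping.lookup f (lm ord f)"

definition monom :: "('v \<Rightarrow>\<^sub>0 nat) \<Rightarrow> ('v, 'a::{zero,one}) mpoly" where
  "monom m = Poly_Mapping.single m 1"

definition init_ideal :: "(('v \<Rightarrow>\<^sub>0 nat) \<Rightarrow> ('v \<Rightarrow>\<^sub>0 nat) \<Rightarrow> bool) \<Rightarrow> ('v, 'a::comm_ring_1) mpoly set \<Rightarrow> ('v, 'a) mpoly set" where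
  "init_ideal ord I = ideal_gen {monom (lm ord f) | f. f \<in> I \<and> f \<noteq> 0}"

definition groebner_basis :: "(('v \<Rightarrow>\<^sub>0 nat) \<Rightarrow> ('v \<Rightarrow>\<^sub>0 nat) \<Rightarrow> bool) \<Rightarrow> ('v, 'a::comm_ring_1) mpoly set \<Rightarrow> ('v, 'a) mpoly set \<Rightarrow> bool" where
  "groebner_basis ord G I \<longleftrightarrow> finite G \<and> G \<subseteq> I \<and> 0 \<notin> G \<and>
     init_ideal ord I = ideal_gen {monom (lm ord g) | g. g \<in> G}"

text \<open>lcm of monomials: a + (b - a) is the componentwise max.\<close>
definition mon_lcm :: "('v \<Rightarrow>\<^sub>0 nat) \<Rightarrow> ('v \<Rightarrow>\<^sub>0 nat) \<Rightarrow> ('v \<Rightarrow>\<^sub>0 nat)" where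
  "mon_lcm a b = a + (b - a)"

definition spoly :: "(('v \<Rightarrow>\<^sub>0 nat) \<Rightarrow> ('v \<Rightarrow>\<^sub>0 nat) \<Rightarrow> bool) \<Rightarrow> ('v, 'a::field) mpoly \<Rightarrow> ('v, 'a) mpoly \<Rightarrow> ('v, 'a) mpoly" where
  "spoly ord f g =
     (let L = mon_lcm (lm ord f) (lm ord g) in
        Poly_Mapping.single (L - lm ord f) (inverse (lc ord f)) * f
      - Poly_Mapping.single (L - lm ord g) (inverse (lc ord g)) * g)"

definition S_nice :: "(('v \<Rightarrow>\<^sub>0 nat) \<Rightarrow> ('v \<Rightarrow>\<^sub>0 nat) \<Rightarrow> bool) \<Rightarrow> ('v, 'a::field) mpoly set \<Rightarrow> ('v, 'a) mpoly set \<Rightarrow> bool" where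
  "S_nice ord G E \<longleftrightarrow> (\<forall>f\<in>G. \<forall>g\<in>E. g \<noteq> 0 \<longrightarrow> spoly ord f g \<in> E)"

end

theory Submission
  imports Defs Complex_Main
begin


lemma nat_incsub:
  fixes g :: "nat \<Rightarrow> nat"
  shows "\<exists>s::nat\<Rightarrow>nat. strict_mono s \<and> (\<forall>i j::nat. i \<le> j \<longrightarrow> g (s i) \<le> g (s j))"
proof -
  from seq_monosub[of g] obtain s where s: "strict_mono s" and m: "monoseq (\<lambda>n. g (s n))"
    by blast
  have disj: "(\<forall>i j. i \<le> j \<longrightarrow> g (s i) \<le> g (s j)) \<or> (\<forall>i j. i \<le> j \<longrightarrow> g (s j) \<le> g (s i))"
    using m by (simp add: monoseq_def)
  show ?thesis
  proof (cases "\<forall>i j. i \<le> j \<longrightarrow> g (s i) \<le> g (s j)")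
    case True show ?thesis by (rule exI[of _ s]) (simp add: s True)
  next
    case False
    have dec: "\<forall>i j. i \<le> j \<longrightarrow> g (s j) \<le> g (s i)" using disj False by (elim disjE) simp_all
    define a where "a = (LEAST x. x \<in> range (\<lambda>n. g (s n)))"
    have "a \<in> range (\<lambda>n. g (s n))" unfolding a_def by (rule LeastI[of _ "g (s 0)"]) simp
    then obtain N where N: "g (s N) = a" by blast
    have low: "g (s N) \<le> g (s n)" for n unfolding N a_def by (rule Least_le) simp
    have const: "g (s (n + N)) = g (s N)" for n using dec[rule_format, of N "n+N"] low[of "n+N"] by simp
    have "strict_mono (\<lambda>n. s (n + N)) \<and> (\<forall>i j::nat. i \<le> j \<longrightarrow> g (s (i + N)) \<le> g (s (j + N)))"
      using s const unfolding strict_mono_def by simp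
    then show ?thesis by (rule exI[of _ "\<lambda>n. s (n + N)"])
  qed
qed
lemma dickson_aux:
  fixes V :: "'v set"
  assumes "finite V"
  shows "\<forall>f :: nat \<Rightarrow> ('v \<Rightarrow>\<^sub>0 nat). \<exists>r::nat\<Rightarrow>nat. strict_mono r \<and>
     (\<forall>v\<in>V. \<forall>i j::nat. i \<le> j \<longrightarrow> Poly_Mapping.lookup (f (r i)) v \<le> Poly_Mapping.lookup (f (r j)) v)"
  using assms
proof (induction V rule: finite_induct)
  case empty
  show ?case
  proof (intro allI exI conjI)
    show "strict_mono (id :: nat \<Rightarrow> nat)" by (rule strict_mono_id)
  qed simp
next
  case (insert x F)
  show ?case
  proof
    fix f :: "nat \<Rightarrow> ('v \<Rightarrow>\<^sub>0 nat)"
    obtain r :: "nat \<Rightarrow> nat" where r: "strict_mono r" and rF: "\<forall>v\<in>F. \<forall>i j. i \<le> j \<longrightarrow> Poly_Mapping.lookup (f (r i)) v \<le> Poly_Mapping.lookup (f (r j)) v"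
      using insert.IH by blast
    obtain s :: "nat \<Rightarrow> nat" where s: "strict_mono s" and sx: "\<forall>i j. i \<le> j \<longrightarrow> Poly_Mapping.lookup (f (r (s i))) x \<le> Poly_Mapping.lookup (f (r (s j))) x"
      using nat_incsub[of "\<lambda>n. Poly_Mapping.lookup (f (r n)) x"] by blast
    have "strict_mono (r \<circ> s)" using r s by (rule strict_mono_o)
    moreover have "\<forall>v\<in>insert x F. \<forall>i j. i \<le> j \<longrightarrow> Poly_Mapping.lookup (f ((r \<circ> s) i)) v \<le> Poly_Mapping.lookup (f ((r \<circ> s) j)) v"
    proof (intro ballI allI impI)
      fix v i j assume v: "v \<in> insert x F" and ij: "(i::nat) \<le> j"
      show "Poly_Mapping.lookup (f ((r \<circ> s) i)) v \<le> Poly_Mapping.lookup (f ((r \<circ> s) j)) v"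
      proof (cases "v = x")
        case True then show ?thesis using sx ij by simp
      next
        case False then have "v \<in> F" using v by simp
        moreover have "s i \<le> s j" using s ij by (simp add: strict_mono_less_eq)
        ultimately show ?thesis using rF by simp
      qed
    qed
    ultimately have "strict_mono (r \<circ> s) \<and> (\<forall>v\<in>insert x F. \<forall>i j::nat. i \<le> j \<longrightarrow> Poly_Mapping.lookup (f ((r \<circ> s) i)) v \<le> Poly_Mapping.lookup (f ((r \<circ> s) j)) v)"
      by blast
    then show "\<exists>r::nat\<Rightarrow>nat. strict_mono r \<and> (\<forall>v\<in>insert x F. \<forall>i j::nat. i \<le> j \<longrightarrow> Poly_Mapping.lookup (f (r i)) v \<le> Poly_Mapping.lookup (f (r j)) v)"
      by (rule exI[of _ "r \<circ> s"])
  qed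
qed

lemma pm_le_add:
  fixes a b :: "'v \<Rightarrow>\<^sub>0 nat"
  assumes "\<forall>v. Poly_Mapping.lookup a v \<le> Poly_Mapping.lookup b v"
  shows "b = a + (b - a)"
  by (rule poly_mapping_eqI) (use assms in \<open>simp add: lookup_add lookup_minus\<close>)

lemma mo_props:
  assumes "monomial_order ord"
  shows "ord a a" "ord a b \<Longrightarrow> ord b a \<Longrightarrow> a = b" "ord a b \<Longrightarrow> ord b c \<Longrightarrow> ord a c"
    "ord a b \<or> ord b a" "ord 0 a" "ord a b \<Longrightarrow> ord (a + c) (b + c)" "ord a b \<Longrightarrow> ord (c + a) (c + b)"
proof -
  have A: "(\<forall>a. ord a a) \<and>
     (\<forall>a b. ord a b \<and> ord b a \<longrightarrow> a = b) \<and>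
     (\<forall>a b c. ord a b \<and> ord b c \<longrightarrow> ord a c) \<and>
     (\<forall>a b. ord a b \<or> ord b a) \<and>
     (\<forall>a. ord 0 a) \<and>
     (\<forall>a b c. ord a b \<longrightarrow> ord (a + c) (b + c))"
    using assms unfolding monomial_order_def .
  show "ord a a" using A by blast
  show "ord a b \<Longrightarrow> ord b a \<Longrightarrow> a = b" using A by blast
  show "ord a b \<Longrightarrow> ord b c \<Longrightarrow> ord a c" using A by blast
  show "ord a b \<or> ord b a" using A by blast
  show "ord 0 a" using A by blast
  show "ord a b \<Longrightarrow> ord (a + c) (b + c)" using A by blast
  assume "ord a b"
  then have "ord (a + c) (b + c)" using A by blast
  then show "ord (c + a) (c + b)" by (simp add: add.commute)
qed

lemma mo_add_le: assumes "monomial_order ord" shows "ord a (a + d)"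
  using mo_props(6)[OF assms mo_props(5)[OF assms, of d], of a] by (simp add: add.commute)

lemma mo_wf:
  fixes ord :: "('v::finite \<Rightarrow>\<^sub>0 nat) \<Rightarrow> ('v \<Rightarrow>\<^sub>0 nat) \<Rightarrow> bool"
  assumes mo: "monomial_order ord"
  shows "wf {(a, b). ord a b \<and> a \<noteq> b}"
proof (rule ccontr)
  assume "\<not> ?thesis"
  then obtain f where f: "\<forall>i. ord (f (Suc i)) (f i) \<and> f (Suc i) \<noteq> f i"
    unfolding wf_iff_no_infinite_down_chain by auto
  have chain: "ord (f j) (f i) \<and> f j \<noteq> f i" if "i < j" for i j
    using that
  proof (induction j)
    case 0 then show ?case by simp
  next
    case (Suc j)
    show ?case
    proof (cases "i = j")
      case True then show ?thesis using f by simp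
    next
      case False
      then have ih: "ord (f j) (f i) \<and> f j \<noteq> f i" using Suc by simp
      have o: "ord (f (Suc j)) (f i)" using mo_props(3)[OF mo] f ih by blast
      moreover have "f (Suc j) \<noteq> f i"
      proof
        assume eq: "f (Suc j) = f i"
        then have "ord (f j) (f (Suc j))" using ih by simp
        then show False using f mo_props(2)[OF mo] by metis
      qed
      ultimately show ?thesis by simp
    qed
  qed
  obtain r :: "nat \<Rightarrow> nat" where r: "strict_mono r" and le: "\<forall>v\<in>UNIV. \<forall>i j. i \<le> j \<longrightarrow> Poly_Mapping.lookup (f (r i)) v \<le> Poly_Mapping.lookup (f (r j)) v"
    using dickson_aux[OF finite_UNIV, rule_format, of f] by blast
  have "f (r 1) = f (r 0) + (f (r 1) - f (r 0))" using le by (intro pm_le_add) simp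
  then have "ord (f (r 0)) (f (r 1))" using mo_add_le[OF mo] by metis
  moreover have "ord (f (r 1)) (f (r 0)) \<and> f (r 1) \<noteq> f (r 0)" using chain r by (simp add: strict_mono_def)
  ultimately show False using mo_props(2)[OF mo] by metis
qed



lemma finite_max_ord:
  assumes mo: "monomial_order ord" and "finite K" "K \<noteq> {}"
  shows "\<exists>m\<in>K. \<forall>m'\<in>K. ord m' m"
  using assms(2,3)
proof (induction K rule: finite_ne_induct)
  case (singleton x) then show ?case using mo_props(1)[OF mo] by simp
next
  case (insert x F)
  then obtain m where m: "m \<in> F" "\<forall>m'\<in>F. ord m' m" by blast
  show ?case
  proof (cases "ord m x")
    case True
    have "\<forall>m'\<in>insert x F. ord m' x"
      using m True mo_props(1,3)[OF mo] by blast
    then show ?thesis by blast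
  next
    case False
    then have "ord x m" using mo_props(4)[OF mo] by blast
    then show ?thesis using m by blast
  qed
qed

lemma lm_eq:
  assumes mo: "monomial_order ord" and "m \<in> Poly_Mapping.keys f" "\<forall>m'\<in>Poly_Mapping.keys f. ord m' m"
  shows "lm ord f = m"
  unfolding lm_def
proof (rule the_equality)
  show "m \<in> Poly_Mapping.keys f \<and> (\<forall>m'\<in>Poly_Mapping.keys f. ord m' m)" using assms by blast
next
  fix m' assume "m' \<in> Poly_Mapping.keys f \<and> (\<forall>m''\<in>Poly_Mapping.keys f. ord m'' m')"
  then show "m' = m" using assms mo_props(2)[OF mo] by blast
qed

lemma lm_prop:
  assumes mo: "monomial_order ord" and "f \<noteq> 0"
  shows "lm ord f \<in> Poly_Mapping.keys f" "\<And>k. k \<in> Poly_Mapping.keys f \<Longrightarrow> ord k (lm ord f)"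
proof -
  obtain m where m: "m \<in> Poly_Mapping.keys f" "\<forall>m'\<in>Poly_Mapping.keys f. ord m' m"
    using finite_max_ord[OF mo, of "Poly_Mapping.keys f"] assms(2) by auto
  have "lm ord f = m" using lm_eq[OF mo m] .
  then show "lm ord f \<in> Poly_Mapping.keys f" "\<And>k. k \<in> Poly_Mapping.keys f \<Longrightarrow> ord k (lm ord f)"
    using m by auto
qed

lemma lm_key_le:
  assumes mo: "monomial_order ord" and "k \<in> Poly_Mapping.keys f"
  shows "ord k (lm ord f)"
proof -
  have "f \<noteq> 0" using assms(2) by auto
  then show ?thesis using lm_prop(2)[OF mo] assms(2) by blast
qed

lemma lc_nz:
  assumes mo: "monomial_order ord" and "f \<noteq> 0"
  shows "lc ord f \<noteq> 0"
  using lm_prop(1)[OF mo assms(2)] unfolding lc_def by (simp add: in_keys_iff)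

lemma lm_lt:
  assumes mo: "monomial_order ord" and "p \<noteq> 0" "\<forall>k\<in>Poly_Mapping.keys p. ord k m"
    and "Poly_Mapping.lookup p m = 0"
  shows "ord (lm ord p) m \<and> lm ord p \<noteq> m"
proof -
  have "lm ord p \<in> Poly_Mapping.keys p" using lm_prop(1)[OF mo assms(2)] .
  then show ?thesis using assms(3,4) by (auto simp: in_keys_iff)
qed

lemma lookup_single_mult:
  fixes g :: "('v, 'a::field) mpoly"
  shows "Poly_Mapping.lookup (Poly_Mapping.single d c * g) (d + k) = c * Poly_Mapping.lookup g k"
proof -
  have "Poly_Mapping.lookup (Poly_Mapping.single d c * g) (d + k)
      = (\<Sum>l. (c when d = l) * (\<Sum>q. Poly_Mapping.lookup g q when d + k = l + q))"
    by (simp add: lookup_mult lookup_single)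
  also have "\<dots> = (\<Sum>l. (c * (\<Sum>q. Poly_Mapping.lookup g q when d + k = l + q)) when d = l)"
    by (simp add: when_mult)
  also have "\<dots> = c * (\<Sum>q. Poly_Mapping.lookup g q when d + k = d + q)"
    by simp
  also have "(\<Sum>q. Poly_Mapping.lookup g q when d + k = d + q) = Poly_Mapping.lookup g k"
    by simp
  finally show ?thesis .
qed

lemma keys_single_mult:
  fixes g :: "('v, 'a::field) mpoly"
  assumes "c \<noteq> 0"
  shows "Poly_Mapping.keys (Poly_Mapping.single d c * g) = (\<lambda>k. d + k) ` Poly_Mapping.keys g"
proof
  show "Poly_Mapping.keys (Poly_Mapping.single d c * g) \<subseteq> (\<lambda>k. d + k) ` Poly_Mapping.keys g"
    using keys_mult[of "Poly_Mapping.single d c" g] assms by auto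
  show "(\<lambda>k. d + k) ` Poly_Mapping.keys g \<subseteq> Poly_Mapping.keys (Poly_Mapping.single d c * g)"
    using assms by (auto simp: in_keys_iff lookup_single_mult)
qed

lemma lm_single_mult:
  fixes g :: "('v, 'a::field) mpoly"
  assumes mo: "monomial_order ord" and "c \<noteq> 0" "g \<noteq> 0"
  shows "lm ord (Poly_Mapping.single d c * g) = d + lm ord g"
    "lc ord (Poly_Mapping.single d c * g) = c * lc ord g"
proof -
  show 1: "lm ord (Poly_Mapping.single d c * g) = d + lm ord g"
  proof (rule lm_eq[OF mo])
    show "d + lm ord g \<in> Poly_Mapping.keys (Poly_Mapping.single d c * g)"
      using keys_single_mult[OF assms(2)] lm_prop(1)[OF mo assms(3)] by auto
    show "\<forall>m'\<in>Poly_Mapping.keys (Poly_Mapping.single d c * g). ord m' (d + lm ord g)"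
    proof
      fix m' assume "m' \<in> Poly_Mapping.keys (Poly_Mapping.single d c * g)"
      then obtain k where k: "k \<in> Poly_Mapping.keys g" "m' = d + k"
        using keys_single_mult[OF assms(2), of d g] by auto
      show "ord m' (d + lm ord g)"
        unfolding k(2) by (rule mo_props(7)[OF mo], rule lm_prop(2)[OF mo assms(3) k(1)])
    qed
  qed
  show "lc ord (Poly_Mapping.single d c * g) = c * lc ord g"
    unfolding lc_def 1 lookup_single_mult ..
qed



lemma ideal_diff:
  fixes I :: "('v, 'a::comm_ring_1) mpoly set"
  assumes "is_ideal I" "f \<in> I" "g \<in> I" shows "f - g \<in> I"
proof -
  have "(-1) * g \<in> I" using assms unfolding is_ideal_def by blast
  then have "f + (-1) * g \<in> I" using assms unfolding is_ideal_def by blast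
  then show ?thesis by simp
qed

lemma ideal_add: "is_ideal I \<Longrightarrow> f \<in> I \<Longrightarrow> g \<in> I \<Longrightarrow> f + g \<in> I"
  unfolding is_ideal_def by blast
lemma ideal_mult: "is_ideal I \<Longrightarrow> f \<in> I \<Longrightarrow> s * f \<in> I"
  unfolding is_ideal_def by blast
lemma ideal_0: "is_ideal I \<Longrightarrow> 0 \<in> I"
  unfolding is_ideal_def by blast

lemma ideal_gen_ideal: "is_ideal (ideal_gen A)"
proof -
  have 0: "0 \<in> ideal_gen A" unfolding ideal_gen_def using ideal_0 by blast
  have 1: "f + g \<in> ideal_gen A" if "f \<in> ideal_gen A" "g \<in> ideal_gen A" for f g
    using that unfolding ideal_gen_def using ideal_add by blast
  have 2: "s * f \<in> ideal_gen A" if "f \<in> ideal_gen A" for s f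
    using that unfolding ideal_gen_def using ideal_mult by blast
  show ?thesis unfolding is_ideal_def using 0 1 2 by blast
qed
lemma ideal_gen_sub: "A \<subseteq> ideal_gen A"
  unfolding ideal_gen_def by blast
lemma ideal_gen_least: "is_ideal I \<Longrightarrow> A \<subseteq> I \<Longrightarrow> ideal_gen A \<subseteq> I"
  unfolding ideal_gen_def by blast

lemma ideal_inter: "is_ideal I \<Longrightarrow> is_ideal J \<Longrightarrow> is_ideal (I \<inter> J)"
  unfolding is_ideal_def by blast

lemma ideal_sum_ideal:
  fixes I J :: "('v, 'a::comm_ring_1) mpoly set"
  assumes "is_ideal I" "is_ideal J" shows "is_ideal (ideal_sum I J)"
  unfolding is_ideal_def ideal_sum_def
proof (intro conjI allI ballI)
  have "(0::('v, 'a) mpoly) = 0 + 0 \<and> 0 \<in> I \<and> 0 \<in> J" using ideal_0[OF assms(1)] ideal_0[OF assms(2)] by simp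
  then show "0 \<in> {f + g |f g. f \<in> I \<and> g \<in> J}" by blast
next
  fix f g assume "f \<in> {f + g |f g. f \<in> I \<and> g \<in> J}" "g \<in> {f + g |f g. f \<in> I \<and> g \<in> J}"
  then obtain a b c d where "f = a + b" "g = c + d" "a \<in> I" "b \<in> J" "c \<in> I" "d \<in> J" by blast
  moreover have "a + b + (c + d) = (a + c) + (b + d)" by (simp add: algebra_simps)
  moreover have "a + c \<in> I" "b + d \<in> J"
    using ideal_add[OF assms(1) \<open>a \<in> I\<close> \<open>c \<in> I\<close>] ideal_add[OF assms(2) \<open>b \<in> J\<close> \<open>d \<in> J\<close>] by auto
  moreover have "f + g = (a + c) + (b + d)" using \<open>f = a + b\<close> \<open>g = c + d\<close> by (simp add: algebra_simps)
  ultimately show "f + g \<in> {f + g |f g. f \<in> I \<and> g \<in> J}" by blast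
next
  fix s f assume "f \<in> {f + g |f g. f \<in> I \<and> g \<in> J}"
  then obtain a b where "f = a + b" "a \<in> I" "b \<in> J" by blast
  moreover have "s * (a + b) = s * a + s * b" by (simp add: algebra_simps)
  moreover have "s * a \<in> I" "s * b \<in> J"
    using ideal_mult[OF assms(1) \<open>a \<in> I\<close>] ideal_mult[OF assms(2) \<open>b \<in> J\<close>] by auto
  moreover have "s * f = s * a + s * b" using \<open>f = a + b\<close> by (simp add: algebra_simps)
  ultimately show "s * f \<in> {f + g |f g. f \<in> I \<and> g \<in> J}" by blast
qed

lemma ideal_sum_left: assumes "is_ideal J" shows "I \<subseteq> ideal_sum I J"
proof
  fix f assume "f \<in> I"
  then have "f = f + 0 \<and> f \<in> I \<and> 0 \<in> J" using ideal_0[OF assms] by simp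
  then show "f \<in> ideal_sum I J" unfolding ideal_sum_def by blast
qed
lemma ideal_sum_right: assumes "is_ideal I" shows "J \<subseteq> ideal_sum I J"
proof
  fix f assume "f \<in> J"
  then have "f = 0 + f \<and> 0 \<in> I \<and> f \<in> J" using ideal_0[OF assms] by simp
  then show "f \<in> ideal_sum I J" unfolding ideal_sum_def by blast
qed
lemma ideal_sum_least:
  assumes "is_ideal K" "I \<subseteq> K" "J \<subseteq> K" shows "ideal_sum I J \<subseteq> K"
proof
  fix x assume "x \<in> ideal_sum I J"
  then obtain f g where fg: "x = f + g" "f \<in> I" "g \<in> J" unfolding ideal_sum_def by blast
  then have "f \<in> K" "g \<in> K" using assms(2,3) by auto
  then show "x \<in> K" using ideal_add[OF assms(1)] fg(1) by simp
qed

lemma init_ideal_mono: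
  assumes "I \<subseteq> I'" shows "init_ideal ord I \<subseteq> init_ideal ord I'"
  unfolding init_ideal_def
proof (rule ideal_gen_least[OF ideal_gen_ideal])
  have "{monom (lm ord f) |f. f \<in> I \<and> f \<noteq> 0} \<subseteq> {monom (lm ord f) |f. f \<in> I' \<and> f \<noteq> 0}"
    using assms by blast
  then show "{monom (lm ord f) |f. f \<in> I \<and> f \<noteq> 0} \<subseteq> ideal_gen {monom (lm ord f) |f. f \<in> I' \<and> f \<noteq> 0}"
    using ideal_gen_sub by (rule subset_trans)
qed

definition divset :: "('v \<Rightarrow>\<^sub>0 nat) set \<Rightarrow> ('v, 'a::comm_ring_1) mpoly set" where
  "divset A = {p. \<forall>k\<in>Poly_Mapping.keys p. \<exists>a\<in>A. \<exists>d. k = a + d}"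

lemma divset_ideal: "is_ideal (divset A :: ('b, 'a::comm_ring_1) mpoly set)"
  unfolding is_ideal_def
proof (intro conjI allI ballI)
  show "0 \<in> divset A" unfolding divset_def by simp
next
  fix f g :: "('b, 'a) mpoly" assume "f \<in> divset A" "g \<in> divset A"
  then show "f + g \<in> divset A" unfolding divset_def using keys_add[of f g] by blast
next
  fix s f :: "('b, 'a) mpoly" assume f: "f \<in> divset A"
  show "s * f \<in> divset A" unfolding divset_def
  proof
    show "\<forall>k\<in>Poly_Mapping.keys (s * f). \<exists>a\<in>A. \<exists>d. k = a + d"
    proof
      fix k assume "k \<in> Poly_Mapping.keys (s * f)"
      then obtain b c where "k = b + c" "c \<in> Poly_Mapping.keys f" using keys_mult[of s f] by blast
      moreover obtain a d where "a \<in> A" "c = a + d" using f \<open>c \<in> _\<close> unfolding divset_def by blast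
      ultimately have "k = a + (d + b)" by (simp add: algebra_simps)
      then show "\<exists>a\<in>A. \<exists>d. k = a + d" using \<open>a \<in> A\<close> by blast
    qed
  qed
qed

lemma monom_divset: "monom a \<in> divset A" if "a \<in> A"
  using that by (auto simp: monom_def divset_def intro!: bexI[of _ a] exI[of _ 0])

lemma divset_mono: "A \<subseteq> B \<Longrightarrow> divset A \<subseteq> divset B"
  unfolding divset_def by blast

lemma ideal_gen_monoms_divset:
  "ideal_gen {monom (f x) | x. P x} \<subseteq> (divset {f x | x. P x} :: ('v, 'a::comm_ring_1) mpoly set)"
  by (rule ideal_gen_least[OF divset_ideal]) (auto intro: monom_divset)

lemma divset_sum: "ideal_sum (divset A) (divset B) \<subseteq> (divset (A \<union> B) :: ('v, 'a::comm_ring_1) mpoly set)"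
  by (rule ideal_sum_least[OF divset_ideal]) (simp_all add: divset_mono)

lemma monom_in_divset:
  assumes "(monom m :: ('v, 'a::comm_ring_1) mpoly) \<in> divset A"
  shows "\<exists>a\<in>A. \<exists>d. m = a + d"
  using assms unfolding divset_def monom_def by simp

lemma monom_mult: "(monom (d + a) :: ('v, 'a::comm_ring_1) mpoly) = monom d * monom a"
  unfolding monom_def mult_single by simp



lemma descent:
  fixes ord :: "('v::finite \<Rightarrow>\<^sub>0 nat) \<Rightarrow> ('v \<Rightarrow>\<^sub>0 nat) \<Rightarrow> bool"
    and I I' :: "('v, 'a::field) mpoly set"
  assumes mo: "monomial_order ord" and II: "is_ideal I" and II': "is_ideal I'" and sub: "I \<subseteq> I'"
    and div: "\<And>h. h \<in> I' \<Longrightarrow> h \<noteq> 0 \<Longrightarrow> \<exists>g\<in>I. g \<noteq> 0 \<and> (\<exists>d. lm ord h = lm ord g + d)"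
  shows "I' \<subseteq> I"
proof (rule ccontr)
  assume "\<not> I' \<subseteq> I"
  then obtain h0 where h0: "h0 \<in> I'" "h0 \<notin> I" by blast
  define Q where "Q = {lm ord h | h. h \<in> I' \<and> h \<notin> I}"
  have "lm ord h0 \<in> Q" using h0 unfolding Q_def by blast
  then obtain z where z: "z \<in> Q" and zmin: "\<And>y. (y, z) \<in> {(a, b). ord a b \<and> a \<noteq> b} \<Longrightarrow> y \<notin> Q"
    using wfE_min[OF mo_wf[OF mo]] by blast
  obtain h where h: "h \<in> I'" "h \<notin> I" "lm ord h = z" using z unfolding Q_def by blast
  have hnz: "h \<noteq> 0" using h ideal_0[OF II] by auto
  obtain g d where g: "g \<in> I" "g \<noteq> 0" "lm ord h = lm ord g + d" using div[OF h(1) hnz] by blast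
  define c where "c = lc ord h / lc ord g"
  have lcg: "lc ord g \<noteq> 0" using lc_nz[OF mo g(2)] .
  have cnz: "c \<noteq> 0" using lc_nz[OF mo hnz] lcg unfolding c_def by simp
  define t where "t = Poly_Mapping.single d c * g"
  have tI: "t \<in> I" using ideal_mult[OF II g(1)] unfolding t_def .
  have lmt: "lm ord t = lm ord h" using lm_single_mult(1)[OF mo cnz g(2)] g(3) by (simp add: t_def add.commute)
  have lct: "lc ord t = lc ord h" using lm_single_mult(2)[OF mo cnz g(2)] lcg by (simp add: t_def c_def)
  define h' where "h' = h - t"
  have h'I': "h' \<in> I'" using ideal_diff[OF II' h(1)] tI sub unfolding h'_def by blast
  have h'nI: "h' \<notin> I"
  proof
    assume "h' \<in> I"
    then have "h' + t \<in> I" using ideal_add[OF II] tI by blast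
    then show False using h(2) unfolding h'_def by simp
  qed
  have h'nz: "h' \<noteq> 0" using h'nI ideal_0[OF II] by auto
  have keys: "\<forall>k\<in>Poly_Mapping.keys h'. ord k (lm ord h)"
  proof
    fix k assume "k \<in> Poly_Mapping.keys h'"
    then have "k \<in> Poly_Mapping.keys h \<or> k \<in> Poly_Mapping.keys t" using keys_diff[of h t] unfolding h'_def by blast
    then show "ord k (lm ord h)" using lm_key_le[OF mo, of k h] lm_key_le[OF mo, of k t] lmt by auto
  qed
  have look: "Poly_Mapping.lookup h' (lm ord h) = 0"
    using lct lmt unfolding h'_def lc_def by (simp add: lookup_minus)
  have "ord (lm ord h') (lm ord h) \<and> lm ord h' \<noteq> lm ord h" using lm_lt[OF mo h'nz keys look] .
  moreover have "lm ord h' \<in> Q" using h'I' h'nI unfolding Q_def by blast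
  ultimately show False using zmin h(3) by blast
qed



lemma gb_div:
  assumes gb: "groebner_basis ord G J" and "j \<in> J" "j \<noteq> 0"
  shows "\<exists>g\<in>G. \<exists>d. lm ord j = lm ord g + d"
proof -
  have "monom (lm ord j) \<in> {monom (lm ord f) | f. f \<in> J \<and> f \<noteq> 0}" using assms(2,3) by blast
  then have "monom (lm ord j) \<in> init_ideal ord J"
    unfolding init_ideal_def by (rule ideal_gen_sub[THEN subsetD])
  also have "init_ideal ord J = ideal_gen {monom (lm ord g) | g. g \<in> G}"
    using gb unfolding groebner_basis_def by blast
  also have "\<dots> \<subseteq> divset {lm ord g | g. g \<in> G}" by (rule ideal_gen_monoms_divset)
  finally have "\<exists>a\<in>{lm ord g | g. g \<in> G}. \<exists>d. lm ord j = a + d" by (rule monom_in_divset)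
  then show ?thesis by blast
qed

lemma spoly_red:
  fixes g e :: "('v, 'a::field) mpoly"
  assumes mo: "monomial_order ord" and "g \<noteq> 0" "e \<noteq> 0" and dv: "lm ord e = lm ord g + d"
  shows "Poly_Mapping.single 0 (- lc ord e) * spoly ord g e = e - Poly_Mapping.single d (lc ord e / lc ord g) * g"
proof -
  have lce: "lc ord e \<noteq> 0" using lc_nz[OF mo assms(3)] .
  have L: "mon_lcm (lm ord g) (lm ord e) = lm ord e" unfolding mon_lcm_def dv by simp
  have sp: "spoly ord g e = Poly_Mapping.single d (inverse (lc ord g)) * g - Poly_Mapping.single 0 (inverse (lc ord e)) * e"
    unfolding spoly_def Let_def L using dv by simp
  have "Poly_Mapping.single 0 (- lc ord e) * spoly ord g e
     = (Poly_Mapping.single 0 (- lc ord e) * Poly_Mapping.single d (inverse (lc ord g))) * g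
       - (Poly_Mapping.single 0 (- lc ord e) * Poly_Mapping.single 0 (inverse (lc ord e))) * e"
    unfolding sp by (simp add: right_diff_distrib mult.assoc)
  also have "\<dots> = Poly_Mapping.single d (- (lc ord e / lc ord g)) * g - Poly_Mapping.single 0 (- 1) * e"
    unfolding mult_single using lce by (simp add: divide_inverse)
  also have "\<dots> = e - Poly_Mapping.single d (lc ord e / lc ord g) * g"
    by (simp add: single_uminus)
  finally show ?thesis .
qed

lemma bound_ex:
  assumes mo: "monomial_order ord" and "j + e \<noteq> 0"
  shows "\<exists>m'. (j \<noteq> 0 \<longrightarrow> ord (lm ord j) m') \<and> (e \<noteq> 0 \<longrightarrow> ord (lm ord e) m') \<and>
     ((j \<noteq> 0 \<and> m' = lm ord j) \<or> (e \<noteq> 0 \<and> m' = lm ord e))"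
proof (cases "j = 0")
  case True
  then have "e \<noteq> 0" using assms(2) by simp
  then show ?thesis by (rule_tac exI[of _ "lm ord e"]) (simp add: True mo_props(1)[OF mo])
next
  case jnz: False
  show ?thesis
  proof (cases "e = 0")
    case True then show ?thesis by (rule_tac exI[of _ "lm ord j"]) (simp add: jnz mo_props(1)[OF mo])
  next
    case False
    show ?thesis
    proof (cases "ord (lm ord j) (lm ord e)")
      case True then show ?thesis by (rule_tac exI[of _ "lm ord e"]) (simp add: False mo_props(1)[OF mo])
    next
      case c2: False
      then have "ord (lm ord e) (lm ord j)" using mo_props(4)[OF mo] by blast
      then show ?thesis by (rule_tac exI[of _ "lm ord j"]) (simp add: jnz mo_props(1)[OF mo])
    qed
  qed
qed



lemma lemB:
  fixes ord :: "('v::finite \<Rightarrow>\<^sub>0 nat) \<Rightarrow> ('v \<Rightarrow>\<^sub>0 nat) \<Rightarrow> bool"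
    and J D G :: "('v, 'a::field) mpoly set"
  assumes mo: "monomial_order ord" and IJ: "is_ideal J" and ID: "is_ideal D"
    and gb: "groebner_basis ord G J" and nice: "S_nice ord G D"
    and jJ: "j \<in> J" and eD: "e \<in> D" and hnz: "j + e \<noteq> 0"
  shows "(\<exists>g\<in>G. \<exists>d. lm ord (j + e) = lm ord g + d) \<or> (\<exists>e'\<in>D. e' \<noteq> 0 \<and> (\<exists>d. lm ord (j + e) = lm ord e' + d))"
proof -
  define C where "C = (\<lambda>h::('v, 'a) mpoly. (\<exists>g\<in>G. \<exists>d. lm ord h = lm ord g + d) \<or> (\<exists>e'\<in>D. e' \<noteq> 0 \<and> (\<exists>d. lm ord h = lm ord e' + d)))"
  define P where "P = (\<lambda>m. \<forall>j e::('v, 'a) mpoly. j \<in> J \<longrightarrow> e \<in> D \<longrightarrow> j + e \<noteq> 0 \<longrightarrow> (j \<noteq> 0 \<longrightarrow> ord (lm ord j) m) \<longrightarrow>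
     (e \<noteq> 0 \<longrightarrow> ord (lm ord e) m) \<longrightarrow> C (j + e))"
  have GJ: "G \<subseteq> J" and G0: "0 \<notin> G" using gb unfolding groebner_basis_def by auto
  have Pall: "P m" for m
  proof (induction m rule: wf_induct[OF mo_wf[OF mo]])
    case (1 m)
    have IH: "P y" if "ord y m" "y \<noteq> m" for y using 1 that by blast
    show "P m" unfolding P_def
    proof (intro allI impI)
      fix j e :: "('v, 'a) mpoly" assume jJ: "j \<in> J" and eD: "e \<in> D" and hnz: "j + e \<noteq> 0"
        and bj: "j \<noteq> 0 \<longrightarrow> ord (lm ord j) m" and be: "e \<noteq> 0 \<longrightarrow> ord (lm ord e) m"
      define h where "h = j + e"
      show "C (j + e)"
      proof (cases "e = 0")
        case True
        then have "j \<noteq> 0" using hnz by simp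
        then have "\<exists>g\<in>G. \<exists>d. lm ord j = lm ord g + d" using gb_div[OF gb jJ] by blast
        then show ?thesis unfolding C_def using True by simp
      next
        case enz: False
        show ?thesis
        proof (cases "j = 0")
          case True
          have "lm ord (j + e) = lm ord e + 0" using True by simp
          then show ?thesis unfolding C_def using eD enz by blast
        next
          case jnz: False
          have bj': "ord (lm ord j) m" and be': "ord (lm ord e) m" using bj be jnz enz by auto
          have kj: "ord k m" if "k \<in> Poly_Mapping.keys j" for k
            using mo_props(3)[OF mo lm_key_le[OF mo that] bj'] .
          have ke: "ord k m" if "k \<in> Poly_Mapping.keys e" for k
            using mo_props(3)[OF mo lm_key_le[OF mo that] be'] .
          have kh: "ord k m" if "k \<in> Poly_Mapping.keys h" for k
          proof -
            have "k \<in> Poly_Mapping.keys j \<or> k \<in> Poly_Mapping.keys e"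
              using that keys_add[of j e] unfolding h_def by blast
            then show ?thesis using kj ke by blast
          qed
          have eqj: "lm ord j = m" if "m \<in> Poly_Mapping.keys j"
            using mo_props(2)[OF mo bj' lm_key_le[OF mo that]] .
          have eqe: "lm ord e = m" if "m \<in> Poly_Mapping.keys e"
            using mo_props(2)[OF mo be' lm_key_le[OF mo that]] .
          have lookh: "Poly_Mapping.lookup h m = Poly_Mapping.lookup j m + Poly_Mapping.lookup e m"
            unfolding h_def by (simp add: lookup_add)
          show ?thesis
          proof (cases "Poly_Mapping.lookup h m = 0")
            case False
            then have mh: "m \<in> Poly_Mapping.keys h" by (simp add: in_keys_iff)
            have lmh: "lm ord h = m" using lm_eq[OF mo mh] kh by blast
            have "m \<in> Poly_Mapping.keys j \<or> m \<in> Poly_Mapping.keys e"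
              using mh keys_add[of j e] unfolding h_def by blast
            then show ?thesis
            proof
              assume "m \<in> Poly_Mapping.keys j"
              then have "lm ord j = m" by (rule eqj)
              then have "\<exists>g\<in>G. \<exists>d. lm ord h = lm ord g + d" using gb_div[OF gb jJ jnz] lmh by simp
              then show ?thesis unfolding C_def h_def by simp
            next
              assume "m \<in> Poly_Mapping.keys e"
              then have "lm ord h = lm ord e + 0" using eqe lmh by simp
              then show ?thesis unfolding C_def h_def using eD enz by blast
            qed
          next
            case hm0: True
            have lj: "Poly_Mapping.lookup j (lm ord j) \<noteq> 0" using lc_nz[OF mo jnz] unfolding lc_def .
            have le: "Poly_Mapping.lookup e (lm ord e) \<noteq> 0" using lc_nz[OF mo enz] unfolding lc_def .
            show ?thesis
            proof (cases "lm ord j = m")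
              case jm: True
              show ?thesis
              proof (cases "lm ord e = m")
                case em: False
                have "Poly_Mapping.lookup e m = 0"
                  using eqe em by (auto simp: in_keys_iff)
                then show ?thesis using hm0 lookh lj jm by simp
              next
                case em: True
                obtain g d where g: "g \<in> G" "lm ord j = lm ord g + d" using gb_div[OF gb jJ jnz] by blast
                have gnz: "g \<noteq> 0" using g(1) G0 by auto
                have gJ: "g \<in> J" using g(1) GJ by auto
                have dv: "lm ord e = lm ord g + d" using g(2) jm em by simp
                define c where "c = lc ord e / lc ord g"
                have cnz: "c \<noteq> 0" using lc_nz[OF mo enz] lc_nz[OF mo gnz] unfolding c_def by simp
                define t where "t = Poly_Mapping.single d c * g"
                have lmt: "lm ord t = m" using lm_single_mult(1)[OF mo cnz gnz] dv em
                  by (simp add: t_def add.commute)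
                have lct: "lc ord t = lc ord e"
                  using lm_single_mult(2)[OF mo cnz gnz] lc_nz[OF mo gnz] by (simp add: t_def c_def)
                have lookt: "Poly_Mapping.lookup t m = Poly_Mapping.lookup e m"
                  using lct lmt em unfolding lc_def by simp
                have kt: "ord k m" if "k \<in> Poly_Mapping.keys t" for k
                  using lm_key_le[OF mo that] lmt by simp
                define e2 where "e2 = e - t"
                define j2 where "j2 = j + t"
                have e2D: "e2 \<in> D"
                proof -
                  have "spoly ord g e \<in> D" using nice g(1) eD enz unfolding S_nice_def by blast
                  then have "Poly_Mapping.single 0 (- lc ord e) * spoly ord g e \<in> D" by (rule ideal_mult[OF ID])
                  then show ?thesis unfolding spoly_red[OF mo gnz enz dv] e2_def t_def c_def .
                qed
                have j2J: "j2 \<in> J" unfolding j2_def t_def by (rule ideal_add[OF IJ jJ ideal_mult[OF IJ gJ]])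
                have sum: "j2 + e2 = j + e" unfolding j2_def e2_def by simp
                have lt_e2: "ord (lm ord e2) m \<and> lm ord e2 \<noteq> m" if "e2 \<noteq> 0"
                proof (rule lm_lt[OF mo that])
                  show "\<forall>k\<in>Poly_Mapping.keys e2. ord k m"
                  proof
                    fix k assume "k \<in> Poly_Mapping.keys e2"
                    then have "k \<in> Poly_Mapping.keys e \<or> k \<in> Poly_Mapping.keys t"
                      using keys_diff[of e t] unfolding e2_def by blast
                    then show "ord k m" using ke kt by blast
                  qed
                  show "Poly_Mapping.lookup e2 m = 0" unfolding e2_def using lookt by (simp add: lookup_minus)
                qed
                have lt_j2: "ord (lm ord j2) m \<and> lm ord j2 \<noteq> m" if "j2 \<noteq> 0"
                proof (rule lm_lt[OF mo that])
                  show "\<forall>k\<in>Poly_Mapping.keys j2. ord k m"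
                  proof
                    fix k assume "k \<in> Poly_Mapping.keys j2"
                    then have "k \<in> Poly_Mapping.keys j \<or> k \<in> Poly_Mapping.keys t"
                      using keys_add[of j t] unfolding j2_def by blast
                    then show "ord k m" using kj kt by blast
                  qed
                  show "Poly_Mapping.lookup j2 m = 0" unfolding j2_def using lookt hm0 lookh by (simp add: lookup_add)
                qed
                have s2: "j2 + e2 \<noteq> 0" using sum hnz by simp
                obtain m' where m': "j2 \<noteq> 0 \<longrightarrow> ord (lm ord j2) m'" "e2 \<noteq> 0 \<longrightarrow> ord (lm ord e2) m'"
                  "(j2 \<noteq> 0 \<and> m' = lm ord j2) \<or> (e2 \<noteq> 0 \<and> m' = lm ord e2)"
                  using bound_ex[OF mo s2] by blast
                have "ord m' m \<and> m' \<noteq> m" using m'(3) lt_j2 lt_e2 by blast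
                then have "P m'" using IH by blast
                then have "C (j2 + e2)" unfolding P_def using j2J e2D s2 m'(1,2) by blast
                then show ?thesis using sum by simp
              qed
            next
              case jm: False
              show ?thesis
              proof (cases "lm ord e = m")
                case em: True
                have "Poly_Mapping.lookup j m = 0"
                  using eqj jm by (auto simp: in_keys_iff)
                then show ?thesis using hm0 lookh le em by simp
              next
                case em: False
                obtain m' where m': "j \<noteq> 0 \<longrightarrow> ord (lm ord j) m'" "e \<noteq> 0 \<longrightarrow> ord (lm ord e) m'"
                  "(j \<noteq> 0 \<and> m' = lm ord j) \<or> (e \<noteq> 0 \<and> m' = lm ord e)"
                  using bound_ex[OF mo hnz] by blast
                have "ord m' m \<and> m' \<noteq> m" using m'(3) bj' be' jm em by blast
                then have "P m'" using IH by blast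
                then show "C (j + e)" unfolding P_def using jJ eD hnz m'(1,2) by blast
              qed
            qed
          qed
        qed
      qed
    qed
  qed
  obtain m' where m': "j \<noteq> 0 \<longrightarrow> ord (lm ord j) m'" "e \<noteq> 0 \<longrightarrow> ord (lm ord e) m'"
    using bound_ex[OF mo hnz] by blast
  have "C (j + e)" using Pall[of m'] unfolding P_def using jJ eD hnz m' by blast
  then show ?thesis unfolding C_def .
qed



lemma ideal_sum_mono: "I \<subseteq> I' \<Longrightarrow> J \<subseteq> J' \<Longrightarrow> ideal_sum I J \<subseteq> ideal_sum I' J'"
  unfolding ideal_sum_def by blast

lemma init_ideal_ideal: "is_ideal (init_ideal ord I)"
  unfolding init_ideal_def by (rule ideal_gen_ideal)

lemma monom_lm_init: "h \<in> I \<Longrightarrow> h \<noteq> 0 \<Longrightarrow> monom (lm ord h) \<in> init_ideal ord I"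
proof -
  assume "h \<in> I" "h \<noteq> 0"
  then have "monom (lm ord h) \<in> {monom (lm ord f) | f. f \<in> I \<and> f \<noteq> 0}" by blast
  then show ?thesis unfolding init_ideal_def by (rule ideal_gen_sub[THEN subsetD])
qed

theorem mainTheorem17:
  fixes ord :: "('v::finite \<Rightarrow>\<^sub>0 nat) \<Rightarrow> ('v \<Rightarrow>\<^sub>0 nat) \<Rightarrow> bool"
    and J E E' G :: "('v, 'a::field) mpoly set"
  assumes "monomial_order ord"
    and "is_ideal J" and "is_ideal E" and "is_ideal E'"
    and "groebner_basis ord G J"
    and "S_nice ord G E" and "S_nice ord G E'"
  shows "ideal_sum J E \<inter> ideal_sum J E' = ideal_sum J (E \<inter> E') \<longleftrightarrow>
         init_ideal ord (ideal_sum J E \<inter> ideal_sum J E') =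
           ideal_sum (init_ideal ord J) (init_ideal ord (E \<inter> E'))"
proof -
  note mo = assms(1) and IJ = assms(2) and IE = assms(3) and IE' = assms(4) and gb = assms(5)
  define D where "D = E \<inter> E'"
  have ID: "is_ideal D" unfolding D_def by (rule ideal_inter[OF IE IE'])
  have niceD: "S_nice ord G D" unfolding S_nice_def
  proof (intro ballI impI)
    fix f g :: "('v, 'a) mpoly" assume "f \<in> G" "g \<in> D" "g \<noteq> 0"
    then have "spoly ord f g \<in> E" "spoly ord f g \<in> E'"
      using assms(6,7) unfolding S_nice_def D_def by auto
    then show "spoly ord f g \<in> D" unfolding D_def by simp
  qed
  have GJ: "G \<subseteq> J" using gb unfolding groebner_basis_def by blast
  have initJ: "init_ideal ord J = ideal_gen {monom (lm ord g) | g. g \<in> G}"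
    using gb unfolding groebner_basis_def by blast
  define I1 where "I1 = ideal_sum J D"
  define I2 where "I2 = ideal_sum J E \<inter> ideal_sum J E'"
  have II1: "is_ideal I1" unfolding I1_def by (rule ideal_sum_ideal[OF IJ ID])
  have II2: "is_ideal I2" unfolding I2_def
    by (rule ideal_inter[OF ideal_sum_ideal[OF IJ IE] ideal_sum_ideal[OF IJ IE']])
  have JI1: "J \<subseteq> I1" unfolding I1_def by (rule ideal_sum_left[OF ID])
  have DI1: "D \<subseteq> I1" unfolding I1_def by (rule ideal_sum_right[OF IJ])
  have sub12: "I1 \<subseteq> I2" unfolding I1_def
  proof (rule ideal_sum_least[OF II2])
    show "J \<subseteq> I2" unfolding I2_def using ideal_sum_left[OF IE, of J] ideal_sum_left[OF IE', of J] by blast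
    show "D \<subseteq> I2" unfolding I2_def D_def using ideal_sum_right[OF IJ, of E] ideal_sum_right[OF IJ, of E'] by blast
  qed
  have easy: "ideal_sum (init_ideal ord J) (init_ideal ord D) \<subseteq> init_ideal ord I1"
    by (rule ideal_sum_least[OF init_ideal_ideal init_ideal_mono[OF JI1] init_ideal_mono[OF DI1]])
  have IS: "is_ideal (ideal_sum (init_ideal ord J) (init_ideal ord D))"
    by (rule ideal_sum_ideal[OF init_ideal_ideal init_ideal_ideal])
  have hard: "init_ideal ord I1 \<subseteq> ideal_sum (init_ideal ord J) (init_ideal ord D)"
    unfolding init_ideal_def[of ord I1]
  proof (rule ideal_gen_least[OF IS])
    show "{monom (lm ord f) |f. f \<in> I1 \<and> f \<noteq> 0} \<subseteq> ideal_sum (init_ideal ord J) (init_ideal ord D)"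
    proof
      fix x :: "('v, 'a) mpoly" assume "x \<in> {monom (lm ord f) |f. f \<in> I1 \<and> f \<noteq> 0}"
      then obtain h where h: "x = monom (lm ord h)" "h \<in> I1" "h \<noteq> 0" by blast
      then obtain j e where je: "h = j + e" "j \<in> J" "e \<in> D" unfolding I1_def ideal_sum_def by blast
      have "(\<exists>g\<in>G. \<exists>d. lm ord (j + e) = lm ord g + d) \<or> (\<exists>e'\<in>D. e' \<noteq> 0 \<and> (\<exists>d. lm ord (j + e) = lm ord e' + d))"
        using lemB[OF mo IJ ID gb niceD je(2,3)] h(3) je(1) by blast
      then show "x \<in> ideal_sum (init_ideal ord J) (init_ideal ord D)"
      proof
        assume "\<exists>g\<in>G. \<exists>d. lm ord (j + e) = lm ord g + d"
        then obtain g d where g: "g \<in> G" "lm ord h = lm ord g + d" using je(1) by blast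
        have "g \<in> J" "g \<noteq> 0" using g(1) GJ gb unfolding groebner_basis_def by auto
        then have "monom (lm ord g) \<in> init_ideal ord J" by (rule monom_lm_init)
        then have "monom d * monom (lm ord g) \<in> init_ideal ord J" by (rule ideal_mult[OF init_ideal_ideal])
        then have "x \<in> init_ideal ord J" unfolding h(1) g(2) monom_mult[symmetric] by (simp add: add.commute)
        then show ?thesis using ideal_sum_left[OF init_ideal_ideal] by blast
      next
        assume "\<exists>e'\<in>D. e' \<noteq> 0 \<and> (\<exists>d. lm ord (j + e) = lm ord e' + d)"
        then obtain e' d where e': "e' \<in> D" "e' \<noteq> 0" "lm ord h = lm ord e' + d" using je(1) by blast
        then have "monom (lm ord e') \<in> init_ideal ord D" by (intro monom_lm_init)
        then have "monom d * monom (lm ord e') \<in> init_ideal ord D" by (rule ideal_mult[OF init_ideal_ideal])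
        then have "x \<in> init_ideal ord D" unfolding h(1) e'(3) monom_mult[symmetric] by (simp add: add.commute)
        then show ?thesis using ideal_sum_right[OF init_ideal_ideal] by blast
      qed
    qed
  qed
  have "I2 = I1 \<longleftrightarrow> init_ideal ord I2 = ideal_sum (init_ideal ord J) (init_ideal ord D)"
  proof
    assume "I2 = I1"
    then show "init_ideal ord I2 = ideal_sum (init_ideal ord J) (init_ideal ord D)"
      using easy hard by simp
  next
    assume eq: "init_ideal ord I2 = ideal_sum (init_ideal ord J) (init_ideal ord D)"
    define A where "A = {lm ord g | g. g \<in> G}"
    define B where "B = {lm ord f | f. f \<in> D \<and> f \<noteq> 0}"
    have dJ: "init_ideal ord J \<subseteq> (divset A :: ('v, 'a) mpoly set)"
      unfolding initJ A_def by (rule ideal_gen_monoms_divset)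
    have dD: "init_ideal ord D \<subseteq> (divset B :: ('v, 'a) mpoly set)"
      unfolding init_ideal_def B_def by (rule ideal_gen_monoms_divset)
    have dI2: "init_ideal ord I2 \<subseteq> (divset (A \<union> B) :: ('v, 'a) mpoly set)"
      unfolding eq using ideal_sum_mono[OF dJ dD] divset_sum by (rule subset_trans)
    have "I2 \<subseteq> I1"
    proof (rule descent[OF mo II1 II2 sub12])
      fix h assume h: "h \<in> I2" "h \<noteq> 0"
      have "monom (lm ord h) \<in> (divset (A \<union> B) :: ('v, 'a) mpoly set)"
        using monom_lm_init[OF h] dI2 by blast
      then obtain a d where ad: "a \<in> A \<union> B" "lm ord h = a + d" using monom_in_divset by blast
      show "\<exists>g\<in>I1. g \<noteq> 0 \<and> (\<exists>d. lm ord h = lm ord g + d)"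
      proof (cases "a \<in> A")
        case True
        then obtain g where "g \<in> G" "a = lm ord g" unfolding A_def by blast
        moreover then have "g \<in> I1" "g \<noteq> 0" using GJ JI1 gb unfolding groebner_basis_def by auto
        ultimately show ?thesis using ad(2) by blast
      next
        case False
        then have "a \<in> B" using ad(1) by blast
        then obtain f where "f \<in> D" "f \<noteq> 0" "a = lm ord f" unfolding B_def by blast
        moreover then have "f \<in> I1" using DI1 by blast
        ultimately show ?thesis using ad(2) by blast
      qed
    qed
    then show "I2 = I1" using sub12 by blast
  qed
  then show ?thesis unfolding I1_def I2_def D_def .
qed


end
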